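(* Let $q>0$, $q\neq1$, and $s\in(0,1)$ with $s^2>1/(1+\sqrt{q})$. For $\eta=(\eta_1,\eta_2)=(\cos\theta_\eta,\sin\theta_\eta)\in\mathbb{S}^1$, let $\mathcal{T}_1\theta_\eta$, $\mathcal{T}_2\theta_\eta$ be the two solutions $\theta_\xi$ (with $\xi=(\xi_1,\xi_2)=(\cos\theta_\xi,\sin\theta_\xi)$) of $$\sqrt{q}\,(\eta_1\xi_2-s^2\eta_2\xi_1)+(1-s^2)\xi_1\xi_2=0,$$ ordered so that $\operatorname{sgn}\cos\theta_\eta=\operatorname{sgn}\cos\mathcal{T}_1\theta_\eta=-\operatorname{sgn}\cos\mathcal{T}_2\theta_\eta$ and $\operatorname{sgn}\sin\theta_\eta=\operatorname{sgn}\sin\mathcal{T}_1\theta_\eta=-\operatorname{sgn}\sin\mathcal{T}_2\theta_\eta$. Then: (a) $\mathcal{T}_j(\theta_\eta+\pi)=\mathcal{T}_j\theta_\eta+\pi$ (mod $2\pi$) for $j=1,2$; (b) for $j=1,2$, with $\xi_1=\cos\mathcal{T}_j\theta_\eta$, $\xi_2=\sin\mathcal{T}_j\theta_\eta$, whenever $\eta_1\eta_2\neq0$, $$\frac{|\eta_1|}{|\xi_1|}-s^2\frac{|\eta_2|}{|\xi_2|}=(-1)^j\frac{1-s^2}{\sqrt{q}};$$ (c) $|\cos\mathcal{T}_2\theta_\eta|<|\cos\mathcal{T}_1\theta_\eta|$ whenever $\eta_1\eta_2\neq0$.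
   Context: Angles are taken modulo $2\pi$. It is a known fact (used as the setting here) that under the condition $s^2>1/(1+\sqrt{q})$ the displayed equation has, for each $\eta\in\mathbb{S}^1$, exactly two solutions $\theta_\xi\in\mathbb{R}/(2\pi\mathbb{Z})$, and they can be ordered as stated; moreover $|\cos\theta_\eta|\le|\cos\mathcal{T}_1\theta_\eta|$, and $|\cos\theta_\eta|\le|\cos\mathcal{T}_2\theta_\eta|\le|\cos\theta_\eta|/s^2$ if $q>1$, $|\cos\theta_\eta|\ge|\cos\mathcal{T}_2\theta_\eta|$ if $0<q<1$, and $\mathcal{T}_1\theta_\eta=\theta_\eta$ iff $\mathcal{T}_2\theta_\eta=\theta_\eta+\pi$ iff $\theta_\eta\in\{0,\pi/2,\pi,3\pi/2\}$. (This arises from stationary points for the ellipse $(x_1/a)^2+(x_2/b)^2<1$, $s=b/a$.) *)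

theory Defs
  imports Complex_Main
begin

definition stat_eq :: "real \<Rightarrow> real \<Rightarrow> real \<Rightarrow> real \<Rightarrow> bool" where
  "stat_eq q s th ph \<longleftrightarrow>
     sqrt q * (cos th * sin ph - s\<^sup>2 * sin th * cos ph) + (1 - s\<^sup>2) * cos ph * sin ph = 0"

definition angle_cong :: "real \<Rightarrow> real \<Rightarrow> bool" where
  "angle_cong a b \<longleftrightarrow> (\<exists>k::int. a = b + 2 * pi * of_int k)"

end

theory Submission
  imports Defs
begin

lemma cong_of_eq: assumes "cos a = cos b" "sin a = sin b" shows "angle_cong a b"
proof -
  have "cos (a - b) = 1" using assms by (simp add: cos_diff sin_cos_squared_add)
  then obtain n::int where "a - b = of_int n * 2 * pi" using cos_one_2pi_int by blast
  then show ?thesis unfolding angle_cong_def by (intro exI[of _ n]) (simp add: algebra_simps)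
qed

lemma mono_key:
  fixes u1 u2 v1 v2 C D k :: real
  assumes "0<u1" "u1<u2" "u1^2+v1^2=1" "u2^2+v2^2=1" "v1>0" "v2>0" "C>0" "D>0" "k>0"
  shows "C/u2 - k*(D/v2) < C/u1 - k*(D/v1)"
proof -
  have "u1^2 < u2^2" using assms by (simp add: power_strict_mono)
  hence "v2^2 < v1^2" using assms by linarith
  hence "v2 < v1" using assms by (meson power_less_imp_less_base less_le)
  have "C/u2 < C/u1" using assms by (simp add: divide_strict_left_mono)
  moreover have "D/v1 < D/v2" using assms \<open>v2<v1\<close> by (simp add: divide_strict_left_mono)
  moreover have "k*(D/v1) < k*(D/v2)" using calculation(2) assms(9) by (rule mult_strict_left_mono)
  ultimately show ?thesis by linarith
qed

lemma eqn_abs: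
  fixes r k a c d x y e :: real
  assumes "r>0" "r*(c*y - k*d*x) + a*x*y = 0" "sgn x = e*sgn c" "sgn y = e * sgn d"
    "e=1 \<or> e=-1" "c\<noteq>0" "d\<noteq>0"
  shows "\<bar>c\<bar>/\<bar>x\<bar> - k*(\<bar>d\<bar>/\<bar>y\<bar>) = -e*(a/r)"
proof -
  have e0: "e \<noteq> 0" using assms(5) by auto
  have "sgn x \<noteq> 0" "sgn y \<noteq> 0" unfolding assms(3,4) using e0 assms(6,7) by (simp_all add: sgn_eq_0_iff)
  hence x0: "x\<noteq>0" "y\<noteq>0" by (simp_all add: sgn_eq_0_iff)
  have "c/x - k*(d/y) = -(a/r)" using assms(1,2) x0 by (simp add: field_simps)
  moreover have "c/x = e*(\<bar>c\<bar>/\<bar>x\<bar>)" if "sgn x = e*sgn c" "c \<noteq> 0" "x \<noteq> 0" for c x :: real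
  proof -
    have xx: "x = e*sgn c*\<bar>x\<bar>" using that(1) by (metis sgn_mult_abs)
    have cc: "c = sgn c*\<bar>c\<bar>" by (simp add: sgn_mult_abs)
    have "c/x = (sgn c*\<bar>c\<bar>)/(e*sgn c*\<bar>x\<bar>)" using xx cc by metis
    also have "\<dots> = e*(\<bar>c\<bar>/\<bar>x\<bar>)" using assms(5) that(2)
      by (cases "c > 0") (auto simp: sgn_if)
    finally show ?thesis .
  qed
  ultimately have "e*(\<bar>c\<bar>/\<bar>x\<bar> - k*(\<bar>d\<bar>/\<bar>y\<bar>)) = -(a/r)"
    using assms(3,4,6,7) x0 by (simp add: algebra_simps)
  then show ?thesis using assms(5) by auto
qed

lemma sgn_abs_eq: fixes u v :: real assumes "sgn u = sgn v" "\<bar>u\<bar> = \<bar>v\<bar>" shows "u = v"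
  using assms by (metis sgn_mult_abs)

lemma sq_abs: fixes u v :: real assumes "u^2 = v^2" shows "\<bar>u\<bar> = \<bar>v\<bar>"
  using assms by (auto simp: power2_eq_iff)

lemma uniq:
  fixes r k a c d x1 y1 x2 y2 e :: real
  assumes r: "r>0" and k: "k>0" and cd: "c^2+d^2=1" and n1: "x1^2+y1^2=1" and n2: "x2^2+y2^2=1"
    and e1: "r*(c*y1 - k*d*x1) + a*x1*y1 = 0" and e2: "r*(c*y2 - k*d*x2) + a*x2*y2 = 0"
    and s1: "sgn x1 = e*sgn c" "sgn y1 = e * sgn d"
    and s2: "sgn x2 = e*sgn c" "sgn y2 = e * sgn d"
    and e: "e=1 \<or> e=-1"
  shows "x1 = x2 \<and> y1 = y2"
proof (cases "c = 0")
  case True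
  hence "x1 = 0" "x2 = 0" using s1 s2 by (simp_all add: sgn_eq_0_iff)
  have sq: "y1^2 = y2^2" using n1 n2 \<open>x1 = 0\<close> \<open>x2 = 0\<close> by simp
  have "y1 = y2" using sq_abs[OF sq] by (rule sgn_abs_eq[rotated]) (simp add: s1 s2)
  thus ?thesis using \<open>x1 = 0\<close> \<open>x2 = 0\<close> by simp
next
  case c0: False
  show ?thesis
  proof (cases "d = 0")
    case True
    hence "y1 = 0" "y2 = 0" using s1 s2 by (simp_all add: sgn_eq_0_iff)
    have sq: "x1^2 = x2^2" using n1 n2 \<open>y1 = 0\<close> \<open>y2 = 0\<close> by simp
    have "x1 = x2" using sq_abs[OF sq] by (rule sgn_abs_eq[rotated]) (simp add: s1 s2)
    thus ?thesis using \<open>y1 = 0\<close> \<open>y2 = 0\<close> by simp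
  next
    case d0: False
    have e0: "e \<noteq> 0" using e by auto
    have "sgn x1 \<noteq> 0" "sgn y1 \<noteq> 0" "sgn x2 \<noteq> 0" "sgn y2 \<noteq> 0"
      unfolding s1 s2 using e0 c0 d0 by (simp_all add: sgn_eq_0_iff)
    hence nz: "x1 \<noteq> 0" "y1 \<noteq> 0" "x2 \<noteq> 0" "y2 \<noteq> 0" by (simp_all add: sgn_eq_0_iff)
    have F1: "\<bar>c\<bar>/\<bar>x1\<bar> - k*(\<bar>d\<bar>/\<bar>y1\<bar>) = -e*(a/r)"
      by (rule eqn_abs[OF r e1 s1 e c0 d0])
    have F2: "\<bar>c\<bar>/\<bar>x2\<bar> - k*(\<bar>d\<bar>/\<bar>y2\<bar>) = -e*(a/r)"
      by (rule eqn_abs[OF r e2 s2 e c0 d0])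
    have m1: "\<bar>x1\<bar>^2+\<bar>y1\<bar>^2=1" "\<bar>x2\<bar>^2+\<bar>y2\<bar>^2=1" using n1 n2 by simp_all
    have "\<bar>x1\<bar> = \<bar>x2\<bar>"
    proof (rule ccontr)
      assume "\<bar>x1\<bar> \<noteq> \<bar>x2\<bar>"
      hence "\<bar>x1\<bar> < \<bar>x2\<bar> \<or> \<bar>x2\<bar> < \<bar>x1\<bar>" by linarith
      thus False
      proof
        assume lt: "\<bar>x1\<bar> < \<bar>x2\<bar>"
        have "\<bar>c\<bar>/\<bar>x2\<bar> - k*(\<bar>d\<bar>/\<bar>y2\<bar>) < \<bar>c\<bar>/\<bar>x1\<bar> - k*(\<bar>d\<bar>/\<bar>y1\<bar>)"
          by (rule mono_key[OF _ lt m1(1) m1(2)]) (use nz c0 d0 k in simp_all)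
        with F1 F2 show False by linarith
      next
        assume lt: "\<bar>x2\<bar> < \<bar>x1\<bar>"
        have "\<bar>c\<bar>/\<bar>x1\<bar> - k*(\<bar>d\<bar>/\<bar>y1\<bar>) < \<bar>c\<bar>/\<bar>x2\<bar> - k*(\<bar>d\<bar>/\<bar>y2\<bar>)"
          by (rule mono_key[OF _ lt m1(2) m1(1)]) (use nz c0 d0 k in simp_all)
        with F1 F2 show False by linarith
      qed
    qed
    hence "x1 = x2" by (rule sgn_abs_eq[rotated]) (simp add: s1 s2)
    have sq: "y1^2 = y2^2" using n1 n2 \<open>x1 = x2\<close> by simp
    have "y1 = y2" using sq_abs[OF sq] by (rule sgn_abs_eq[rotated]) (simp add: s1 s2)
    with \<open>x1 = x2\<close> show ?thesis by simp
  qed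
qed

theorem corollary1:
  fixes q s :: real and T1 T2 :: "real \<Rightarrow> real"
  assumes q_pos: "q > 0" and q_ne1: "q \<noteq> 1"
    and s_range: "0 < s" "s < 1"
    and s_bound: "s\<^sup>2 > 1 / (1 + sqrt q)"
    and T1_sol: "\<And>th. stat_eq q s th (T1 th)"
    and T1_cos: "\<And>th. sgn (cos (T1 th)) = sgn (cos th)"
    and T1_sin: "\<And>th. sgn (sin (T1 th)) = sgn (sin th)"
    and T2_sol: "\<And>th. stat_eq q s th (T2 th)"
    and T2_cos: "\<And>th. sgn (cos (T2 th)) = - sgn (cos th)"
    and T2_sin: "\<And>th. sgn (sin (T2 th)) = - sgn (sin th)"
  shows "(\<forall>th. angle_cong (T1 (th + pi)) (T1 th + pi) \<and> angle_cong (T2 (th + pi)) (T2 th + pi))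
       \<and> (\<forall>th. cos th * sin th \<noteq> 0 \<longrightarrow>
            \<bar>cos th\<bar> / \<bar>cos (T1 th)\<bar> - s\<^sup>2 * (\<bar>sin th\<bar> / \<bar>sin (T1 th)\<bar>) = (-1) ^ 1 * ((1 - s\<^sup>2) / sqrt q)
          \<and> \<bar>cos th\<bar> / \<bar>cos (T2 th)\<bar> - s\<^sup>2 * (\<bar>sin th\<bar> / \<bar>sin (T2 th)\<bar>) = (-1) ^ 2 * ((1 - s\<^sup>2) / sqrt q))
       \<and> (\<forall>th. cos th * sin th \<noteq> 0 \<longrightarrow> \<bar>cos (T2 th)\<bar> < \<bar>cos (T1 th)\<bar>)"
proof -
  define r where "r = sqrt q"
  define k where "k = s^2"
  define a where "a = 1 - s^2"
  have r: "r > 0" using q_pos by (simp add: r_def)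
  have k: "k > 0" using s_range by (simp add: k_def)
  have a: "a > 0" using s_range by (simp add: a_def power_less_one_iff abs_of_pos)
  have E: "r*(cos th * sin ph - k*sin th*cos ph) + a*cos ph*sin ph = 0"
    if "stat_eq q s th ph" for th ph
    using that unfolding stat_eq_def r_def k_def a_def by simp
  have n: "cos t ^2 + sin t ^2 = 1" for t :: real by (simp add: sin_cos_squared_add2)
  have partA: "angle_cong (T1 (th + pi)) (T1 th + pi) \<and> angle_cong (T2 (th + pi)) (T2 th + pi)" for th
  proof -
    have u1: "cos (T1 (th + pi)) = cos (T1 th + pi) \<and> sin (T1 (th + pi)) = sin (T1 th + pi)"
    proof (rule uniq[OF r k n n n E[OF T1_sol], where e=1])
      show "r * (cos (th + pi) * sin (T1 th + pi) - k * sin (th + pi) * cos (T1 th + pi)) +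
        a * cos (T1 th + pi) * sin (T1 th + pi) = 0" using E[OF T1_sol[of th]] by simp
    qed (simp_all add: T1_cos T1_sin sgn_minus)
    have u2: "cos (T2 (th + pi)) = cos (T2 th + pi) \<and> sin (T2 (th + pi)) = sin (T2 th + pi)"
    proof (rule uniq[OF r k n n n E[OF T2_sol], where e="-1"])
      show "r * (cos (th + pi) * sin (T2 th + pi) - k * sin (th + pi) * cos (T2 th + pi)) +
        a * cos (T2 th + pi) * sin (T2 th + pi) = 0" using E[OF T2_sol[of th]] by simp
    qed (simp_all add: T2_cos T2_sin sgn_minus)
    show ?thesis using u1 u2 cong_of_eq by blast
  qed
  have partB: "\<bar>cos th\<bar> / \<bar>cos (T1 th)\<bar> - s\<^sup>2 * (\<bar>sin th\<bar> / \<bar>sin (T1 th)\<bar>) = - (a / r)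
     \<and> \<bar>cos th\<bar> / \<bar>cos (T2 th)\<bar> - s\<^sup>2 * (\<bar>sin th\<bar> / \<bar>sin (T2 th)\<bar>) = a / r"
    if cs: "cos th * sin th \<noteq> 0" for th
  proof -
    have c0: "cos th \<noteq> 0" and d0: "sin th \<noteq> 0" using cs by auto
    have "\<bar>cos th\<bar> / \<bar>cos (T1 th)\<bar> - k * (\<bar>sin th\<bar> / \<bar>sin (T1 th)\<bar>) = - 1 * (a / r)"
      by (rule eqn_abs[OF r E[OF T1_sol]]) (simp_all add: T1_cos T1_sin c0 d0)
    moreover have "\<bar>cos th\<bar> / \<bar>cos (T2 th)\<bar> - k * (\<bar>sin th\<bar> / \<bar>sin (T2 th)\<bar>) = - (-1) * (a / r)"
      by (rule eqn_abs[OF r E[OF T2_sol]]) (simp_all add: T2_cos T2_sin c0 d0)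
    ultimately show ?thesis by (simp add: k_def)
  qed
  have partC: "\<bar>cos (T2 th)\<bar> < \<bar>cos (T1 th)\<bar>" if cs: "cos th * sin th \<noteq> 0" for th
  proof (rule ccontr)
    assume "\<not> ?thesis"
    hence le: "\<bar>cos (T1 th)\<bar> \<le> \<bar>cos (T2 th)\<bar>" by simp
    have c0: "cos th \<noteq> 0" and d0: "sin th \<noteq> 0" using cs by auto
    have "sgn (cos (T1 th)) \<noteq> 0" "sgn (sin (T1 th)) \<noteq> 0" "sgn (cos (T2 th)) \<noteq> 0" "sgn (sin (T2 th)) \<noteq> 0"
      by (simp_all add: T1_cos T1_sin T2_cos T2_sin c0 d0 sgn_eq_0_iff)
    hence nz: "cos (T1 th) \<noteq> 0" "sin (T1 th) \<noteq> 0" "cos (T2 th) \<noteq> 0" "sin (T2 th) \<noteq> 0"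
      by (simp_all add: sgn_eq_0_iff)
    have m: "\<bar>cos t\<bar>^2+\<bar>sin t\<bar>^2=1" for t :: real by (simp add: sin_cos_squared_add2)
    have B: "\<bar>cos th\<bar> / \<bar>cos (T1 th)\<bar> - k * (\<bar>sin th\<bar> / \<bar>sin (T1 th)\<bar>) = - (a / r)"
         "\<bar>cos th\<bar> / \<bar>cos (T2 th)\<bar> - k * (\<bar>sin th\<bar> / \<bar>sin (T2 th)\<bar>) = a / r"
      using partB[OF cs] by (simp_all add: k_def)
    have ar: "a / r > 0" using a r by simp
    show False
    proof (cases "\<bar>cos (T1 th)\<bar> = \<bar>cos (T2 th)\<bar>")
      case True
      hence "\<bar>cos (T1 th)\<bar>^2 = \<bar>cos (T2 th)\<bar>^2" by simp
      hence "\<bar>sin (T1 th)\<bar>^2 = \<bar>sin (T2 th)\<bar>^2" using m[of "T1 th"] m[of "T2 th"] by linarith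
      hence "\<bar>sin (T1 th)\<bar> = \<bar>sin (T2 th)\<bar>" by (rule power2_eq_imp_eq) auto
      hence "\<bar>cos th\<bar> / \<bar>cos (T1 th)\<bar> - k * (\<bar>sin th\<bar> / \<bar>sin (T1 th)\<bar>)
        = \<bar>cos th\<bar> / \<bar>cos (T2 th)\<bar> - k * (\<bar>sin th\<bar> / \<bar>sin (T2 th)\<bar>)" using True by simp
      with B ar show False by linarith
    next
      case False
      with le have lt: "\<bar>cos (T1 th)\<bar> < \<bar>cos (T2 th)\<bar>" by simp
      have "\<bar>cos th\<bar>/\<bar>cos (T2 th)\<bar> - k*(\<bar>sin th\<bar>/\<bar>sin (T2 th)\<bar>) < \<bar>cos th\<bar>/\<bar>cos (T1 th)\<bar> - k*(\<bar>sin th\<bar>/\<bar>sin (T1 th)\<bar>)"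
        by (rule mono_key[OF _ lt m m]) (use nz c0 d0 k in simp_all)
      with B ar show False by linarith
    qed
  qed
  have neg: "- (a / r) = (-1) ^ 1 * ((1 - s\<^sup>2) / sqrt q)" "a / r = (-1) ^ 2 * ((1 - s\<^sup>2) / sqrt q)"
    by (simp_all add: a_def r_def minus_divide_left)
  show ?thesis
    unfolding neg[symmetric]
  proof (intro conjI allI impI)
    fix th :: real
    show "angle_cong (T1 (th + pi)) (T1 th + pi)" using partA by blast
    show "angle_cong (T2 (th + pi)) (T2 th + pi)" using partA by blast
  next
    fix th :: real assume cs: "cos th * sin th \<noteq> 0"
    show "\<bar>cos th\<bar> / \<bar>cos (T1 th)\<bar> - s\<^sup>2 * (\<bar>sin th\<bar> / \<bar>sin (T1 th)\<bar>) = - (a / r)"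
      using partB[OF cs] by (rule conjunct1)
    show "\<bar>cos th\<bar> / \<bar>cos (T2 th)\<bar> - s\<^sup>2 * (\<bar>sin th\<bar> / \<bar>sin (T2 th)\<bar>) = a / r"
      using partB[OF cs] by (rule conjunct2)
  next
    fix th :: real assume cs: "cos th * sin th \<noteq> 0"
    show "\<bar>cos (T2 th)\<bar> < \<bar>cos (T1 th)\<bar>" by (rule partC[OF cs])
  qed
qed

end
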